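(* Let $\alpha=1/2$, $\rho=1$, $\Omega=\mathbb R$, and assume $\inf l=0$, $\sup l=\infty$. Let $a=\int_{-\infty}^{\infty}\sqrt{f_0(y)f_1(y)}\,dy$. The limiting (maximum) robustness parameters $(\epsilon_0,\epsilon_1)$, i.e. those for which the least favorable distributions coincide ($\hat G_0=\hat G_1$ $\mu$-a.e.), satisfy \[ a=\frac{1}{16}\left(16-4\epsilon_1+\epsilon_0(\epsilon_1-4)-\sqrt{(\epsilon_0-8)\,\epsilon_0\,(\epsilon_1-8)\,\epsilon_1}\right). \] In particular, if $\epsilon_0=\epsilon_1=\epsilon$, the maximum robustness parameter is $\epsilon_{\max}=4-2\sqrt{2(1+a)}$.
   Context: $f_0,f_1$ are distinct nominal probability densities on $\mathbb R$, $l=f_1/f_0$. The $\alpha$-divergence is $D(g,f;\alpha)=\frac{1}{\alpha(1-\alpha)}\big(1-\int g^\alpha f^{1-\alpha}dy\big)$ (for $\alpha=1/2$ this is $4$ times the squared Hellinger distance), uncertainty classes are $\mathcal G_i=\{g_i:D(g_i,f_i;\alpha)\le\epsilon_i\}$, and $\hat G_0,\hat G_1$ denote the least favorable distributions of the minimax Bayes test $\min_\delta\sup_{(g_0,g_1)\in\mathcal G_0\times\mathcal G_1}P_E$ with equal priors. *)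

theory Defs
  imports "HOL-Analysis.Analysis"
begin

definition densities :: "(real \<Rightarrow> real) set" where
  "densities = {g. g \<in> borel_measurable lborel \<and> (\<forall>y. 0 \<le> g y)
                 \<and> integrable lborel g \<and> integral\<^sup>L lborel g = 1}"

definition alpha_div :: "(real \<Rightarrow> real) \<Rightarrow> (real \<Rightarrow> real) \<Rightarrow> real \<Rightarrow> real" where
  "alpha_div g f \<alpha> = 1 / (\<alpha> * (1 - \<alpha>)) *
     (1 - (LINT y|lborel. (g y) powr \<alpha> * (f y) powr (1 - \<alpha>)))"

definition unc_class :: "(real \<Rightarrow> real) \<Rightarrow> real \<Rightarrow> real \<Rightarrow> (real \<Rightarrow> real) set" where
  "unc_class f \<alpha> \<epsilon> = {g \<in> densities. alpha_div g f \<alpha> \<le> \<epsilon>}"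

text \<open>Randomized decision rules (probability of deciding for H1).\<close>
definition decision_rules :: "(real \<Rightarrow> real) set" where
  "decision_rules = {\<delta>. \<delta> \<in> borel_measurable lborel \<and> (\<forall>y. 0 \<le> \<delta> y \<and> \<delta> y \<le> 1)}"

definition error_prob :: "(real \<Rightarrow> real) \<Rightarrow> (real \<Rightarrow> real) \<Rightarrow> (real \<Rightarrow> real) \<Rightarrow> real" where
  "error_prob \<delta> g0 g1 = 1/2 * (LINT y|lborel. \<delta> y * g0 y)
                       + 1/2 * (LINT y|lborel. (1 - \<delta> y) * g1 y)"

text \<open>(hg0,hg1) are least favorable distributions of the minimax test
  min_delta sup_{(g0,g1) in G0 x G1} P_E, i.e. together with a minimax rule
  they form a saddle point of P_E.\<close>
definition least_favorable ::
  "(real \<Rightarrow> real) set \<Rightarrow> (real \<Rightarrow> real) set \<Rightarrow> (real \<Rightarrow> real) \<Rightarrow> (real \<Rightarrow> real) \<Rightarrow> bool" where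
  "least_favorable G0 G1 hg0 hg1 \<longleftrightarrow> hg0 \<in> G0 \<and> hg1 \<in> G1 \<and>
     (\<exists>h\<delta> \<in> decision_rules.
        (\<forall>g0\<in>G0. \<forall>g1\<in>G1. error_prob h\<delta> g0 g1 \<le> error_prob h\<delta> hg0 hg1) \<and>
        (\<forall>\<delta>\<in>decision_rules. error_prob h\<delta> hg0 hg1 \<le> error_prob \<delta> hg0 hg1))"

definition lfd_coincide :: "(real \<Rightarrow> real) \<Rightarrow> (real \<Rightarrow> real) \<Rightarrow> real \<Rightarrow> real \<Rightarrow> real \<Rightarrow> bool" where
  "lfd_coincide f0 f1 \<alpha> \<epsilon>0 \<epsilon>1 \<longleftrightarrow>
     (\<exists>hg0 hg1. least_favorable (unc_class f0 \<alpha> \<epsilon>0) (unc_class f1 \<alpha> \<epsilon>1) hg0 hg1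
               \<and> (AE y in lborel. hg0 y = hg1 y))"

definition limiting_params :: "(real \<Rightarrow> real) \<Rightarrow> (real \<Rightarrow> real) \<Rightarrow> real \<Rightarrow> real \<Rightarrow> real \<Rightarrow> bool" where
  "limiting_params f0 f1 \<alpha> \<epsilon>0 \<epsilon>1 \<longleftrightarrow> 0 \<le> \<epsilon>0 \<and> 0 \<le> \<epsilon>1 \<and>
     lfd_coincide f0 f1 \<alpha> \<epsilon>0 \<epsilon>1 \<and>
     (\<forall>e0 e1. 0 \<le> e0 \<and> e0 \<le> \<epsilon>0 \<and> 0 \<le> e1 \<and> e1 \<le> \<epsilon>1 \<and> (e0, e1) \<noteq> (\<epsilon>0, \<epsilon>1)
        \<longrightarrow> \<not> lfd_coincide f0 f1 \<alpha> e0 e1)"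

text \<open>Likelihood ratio l = f1/f0 with values in the extended reals
  (value infinity where f0 = 0 < f1), considered on the support of f0 + f1.\<close>
definition lik_ratio :: "(real \<Rightarrow> real) \<Rightarrow> (real \<Rightarrow> real) \<Rightarrow> real \<Rightarrow> ereal" where
  "lik_ratio f0 f1 y = (if f0 y > 0 then ereal (f1 y / f0 y) else \<infinity>)"

definition supp2 :: "(real \<Rightarrow> real) \<Rightarrow> (real \<Rightarrow> real) \<Rightarrow> real set" where
  "supp2 f0 f1 = {y. f0 y > 0 \<or> f1 y > 0}"

end

theory Submission
  imports Defs
begin

definition aff :: "(real \<Rightarrow> real) \<Rightarrow> (real \<Rightarrow> real) \<Rightarrow> real" where
  "aff g f = (LINT y|lborel. sqrt (g y) * sqrt (f y))"

lemma dens_D: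
  assumes "g \<in> densities"
  shows "g \<in> borel_measurable lborel" "\<And>y. 0 \<le> g y" "integrable lborel g" "integral\<^sup>L lborel g = 1"
  using assms unfolding densities_def by auto

lemma int_sqrt_prod:
  assumes "g \<in> densities" "f \<in> densities"
  shows "integrable lborel (\<lambda>y. sqrt (g y) * sqrt (f y))"
proof (rule Bochner_Integration.integrable_bound[where f="\<lambda>y. g y + f y"])
  show "integrable lborel (\<lambda>y. g y + f y)" using dens_D[OF assms(1)] dens_D[OF assms(2)] by auto
  show "(\<lambda>y. sqrt (g y) * sqrt (f y)) \<in> borel_measurable lborel"
    using dens_D(1)[OF assms(1)] dens_D(1)[OF assms(2)] by measurable
  show "AE x in lborel. norm (sqrt (g x) * sqrt (f x)) \<le> norm (g x + f x)"
  proof (rule AE_I2)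
    fix x
    have g: "0 \<le> g x" and f: "0 \<le> f x" using dens_D(2)[OF assms(1)] dens_D(2)[OF assms(2)] by auto
    have "sqrt (g x) * sqrt (f x) \<le> g x + f x"
      using arith_geo_mean_sqrt[OF g f] g f by (simp add: real_sqrt_mult)
    then show "norm (sqrt (g x) * sqrt (f x)) \<le> norm (g x + f x)" using g f by simp
  qed
qed

lemma alpha_div_half:
  assumes "g \<in> densities" "f \<in> densities"
  shows "alpha_div g f (1/2) = 4 * (1 - aff g f)"
proof -
  have "\<And>y. g y powr (1/2) * f y powr (1 - 1/2) = sqrt (g y) * sqrt (f y)"
    using dens_D(2)[OF assms(1)] dens_D(2)[OF assms(2)] by (simp add: powr_half_sqrt)
  then show ?thesis unfolding alpha_div_def aff_def by simp
qed


lemma aff_sym: "aff g f = aff f g"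
  unfolding aff_def by (simp add: mult.commute)

lemma aff_self: assumes "g \<in> densities" shows "aff g g = 1"
proof -
  have "\<And>y. sqrt (g y) * sqrt (g y) = g y" using dens_D(2)[OF assms] by simp
  then show ?thesis unfolding aff_def using dens_D(4)[OF assms] by simp
qed

lemma aff_nonneg: assumes "g \<in> densities" "f \<in> densities" shows "aff g f \<ge> 0"
  unfolding aff_def by (rule Bochner_Integration.integral_nonneg) (simp add: dens_D(2)[OF assms(1)] dens_D(2)[OF assms(2)])

lemma quad_form:
  assumes u: "u \<in> densities" and v: "v \<in> densities" and w: "w \<in> densities"
  shows "0 \<le> p^2 + q^2 + r^2 + 2*p*q*aff u v + 2*p*r*aff u w + 2*q*r*aff v w"
proof -
  note iu = dens_D(3)[OF u] and iv = dens_D(3)[OF v] and iw = dens_D(3)[OF w]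
  note i1 = int_sqrt_prod[OF u v] and i2 = int_sqrt_prod[OF u w] and i3 = int_sqrt_prod[OF v w]
  have pt: "\<And>y. (p * sqrt (u y) + q * sqrt (v y) + r * sqrt (w y))^2 =
     (p^2 * u y + q^2 * v y) + (r^2 * w y + 2*p*q * (sqrt (u y) * sqrt (v y)))
     + (2*p*r * (sqrt (u y) * sqrt (w y)) + 2*q*r * (sqrt (v y) * sqrt (w y)))"
    using dens_D(2)[OF u] dens_D(2)[OF v] dens_D(2)[OF w]
    by (simp add: power2_eq_square algebra_simps)
  have "0 \<le> (LINT y|lborel. (p * sqrt (u y) + q * sqrt (v y) + r * sqrt (w y))^2)"
    by (rule Bochner_Integration.integral_nonneg) auto
  also have "\<dots> = p^2 + q^2 + r^2 + 2*p*q*aff u v + 2*p*r*aff u w + 2*q*r*aff v w"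
    unfolding pt aff_def
    using iu iv iw i1 i2 i3 dens_D(4)[OF u] dens_D(4)[OF v] dens_D(4)[OF w]
    by (simp add: integral_add integral_mult_right_zero)
  finally show ?thesis .
qed

lemma aff_le1: assumes "u \<in> densities" "v \<in> densities" shows "aff u v \<le> 1"
  using quad_form[OF assms(1) assms(2) assms(2), of 1 "-1" 0] by simp

lemma gram:
  assumes g: "g \<in> densities" and f0: "f0 \<in> densities" and f1: "f1 \<in> densities"
    and a1: "aff f0 f1 < 1"
  shows "(aff f0 f1 - aff g f0 * aff g f1)^2 \<le> (1 - (aff g f0)^2) * (1 - (aff g f1)^2)"
proof -
  define a where "a = aff f0 f1"
  define c0 where "c0 = aff g f0"
  define c1 where "c1 = aff g f1"
  have Q: "0 \<le> (1-a^2)^2 + (a*c1-c0)^2 + (a*c0-c1)^2 + 2*(1-a^2)*(a*c1-c0)*c0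
       + 2*(1-a^2)*(a*c0-c1)*c1 + 2*(a*c1-c0)*(a*c0-c1)*a"
    using quad_form[OF g f0 f1, of "1-a^2" "a*c1-c0" "a*c0-c1"] unfolding a_def c0_def c1_def by simp
  have eq: "(1-a^2)^2 + (a*c1-c0)^2 + (a*c0-c1)^2 + 2*(1-a^2)*(a*c1-c0)*c0
       + 2*(1-a^2)*(a*c0-c1)*c1 + 2*(a*c1-c0)*(a*c0-c1)*a
       = (1-a^2) * ((1 - c0^2) * (1 - c1^2) - (a - c0*c1)^2)"
    by (simp add: power2_eq_square algebra_simps)
  have a0: "0 \<le> a" unfolding a_def by (rule aff_nonneg[OF f0 f1])
  have "a*a \<le> a" using a1 a0 unfolding a_def by (simp add: mult_left_le_one_le)
  then have pos: "0 < 1 - a^2" using a1 unfolding a_def by (simp add: power2_eq_square)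
  have "0 \<le> (1 - c0^2) * (1 - c1^2) - (a - c0*c1)^2"
    using Q eq pos by (metis zero_le_mult_iff not_less)
  then show ?thesis unfolding a_def c0_def c1_def by simp
qed


lemma aff_lt1:
  assumes f0: "f0 \<in> densities" and f1: "f1 \<in> densities" and ne: "\<not> (AE y in lborel. f0 y = f1 y)"
  shows "aff f0 f1 < 1"
proof (rule ccontr)
  assume "\<not> aff f0 f1 < 1"
  then have a1: "aff f0 f1 = 1" using aff_le1[OF f0 f1] by simp
  have pt: "\<And>y. (sqrt (f0 y) - sqrt (f1 y))^2 = f0 y + f1 y - 2 * (sqrt (f0 y) * sqrt (f1 y))"
    using dens_D(2)[OF f0] dens_D(2)[OF f1] by (simp add: power2_eq_square algebra_simps)
  have int: "integrable lborel (\<lambda>y. (sqrt (f0 y) - sqrt (f1 y))^2)"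
    unfolding pt using dens_D(3)[OF f0] dens_D(3)[OF f1] int_sqrt_prod[OF f0 f1] by auto
  have "(LINT y|lborel. (sqrt (f0 y) - sqrt (f1 y))^2) = 0"
    unfolding pt using dens_D(3,4)[OF f0] dens_D(3,4)[OF f1] int_sqrt_prod[OF f0 f1] a1
    by (simp add: aff_def)
  then have "AE y in lborel. (sqrt (f0 y) - sqrt (f1 y))^2 = 0"
    using integral_nonneg_eq_0_iff_AE[OF int] by simp
  then have "AE y in lborel. f0 y = f1 y"
  proof (rule AE_mp, intro AE_I2 impI)
    fix y assume "(sqrt (f0 y) - sqrt (f1 y))^2 = 0"
    then have "sqrt (f0 y) = sqrt (f1 y)" by simp
    then show "f0 y = f1 y" by simp
  qed
  then show False using ne by simp
qed

lemma construct:
  assumes f0: "f0 \<in> densities" and f1: "f1 \<in> densities" and p: "0 \<le> p" and q: "0 \<le> q"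
    and n: "p^2 + q^2 + 2*p*q*aff f0 f1 = 1"
  defines "g \<equiv> \<lambda>y. (p * sqrt (f0 y) + q * sqrt (f1 y))^2"
  shows "g \<in> densities" "aff g f0 = p + q * aff f0 f1" "aff g f1 = p * aff f0 f1 + q"
proof -
  note n0 = dens_D(2)[OF f0] and n1 = dens_D(2)[OF f1]
  have pt: "\<And>y. g y = p^2 * f0 y + q^2 * f1 y + 2*p*q * (sqrt (f0 y) * sqrt (f1 y))"
    unfolding g_def using n0 n1 by (simp add: power2_eq_square algebra_simps)
  have sq: "\<And>y. sqrt (g y) = p * sqrt (f0 y) + q * sqrt (f1 y)"
    unfolding g_def using p q n0 n1 by simp
  note I = dens_D(3)[OF f0] dens_D(3)[OF f1] int_sqrt_prod[OF f0 f1]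
  show "g \<in> densities"
    unfolding densities_def
  proof (intro CollectI conjI allI)
    show "g \<in> borel_measurable lborel" unfolding g_def using dens_D(1)[OF f0] dens_D(1)[OF f1] by measurable
    show "\<And>y. 0 \<le> g y" unfolding g_def by simp
    show "integrable lborel g" unfolding pt using I by auto
    show "integral\<^sup>L lborel g = 1" unfolding pt using I dens_D(4)[OF f0] dens_D(4)[OF f1] n
      by (simp add: aff_def)
  qed
  have pt0: "\<And>y. sqrt (g y) * sqrt (f0 y) = p * f0 y + q * (sqrt (f0 y) * sqrt (f1 y))"
    unfolding sq using n0 by (simp add: algebra_simps)
  have pt1: "\<And>y. sqrt (g y) * sqrt (f1 y) = p * (sqrt (f0 y) * sqrt (f1 y)) + q * f1 y"
    unfolding sq using n1 by (simp add: algebra_simps)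
  show "aff g f0 = p + q * aff f0 f1"
    unfolding aff_def pt0 using I dens_D(4)[OF f0] by (simp add: aff_def)
  show "aff g f1 = p * aff f0 f1 + q"
    unfolding aff_def pt1 using I dens_D(4)[OF f1] by (simp add: aff_def)
qed

lemma lfd_from:
  assumes f0: "f0 \<in> densities" and f1: "f1 \<in> densities" and g: "g \<in> densities"
    and e0: "4 * (1 - aff g f0) \<le> e0" and e1: "4 * (1 - aff g f1) \<le> e1"
  shows "lfd_coincide f0 f1 (1/2) e0 e1"
proof -
  have gin0: "g \<in> unc_class f0 (1/2) e0" unfolding unc_class_def using g e0 alpha_div_half[OF g f0] by simp
  have gin1: "g \<in> unc_class f1 (1/2) e1" unfolding unc_class_def using g e1 alpha_div_half[OF g f1] by simp
  have half: "\<And>h. h \<in> densities \<Longrightarrow> (LINT y|lborel. 1/2 * h y) = 1/2"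
    using dens_D(4) by simp
  have ep: "\<And>g0 g1. g0 \<in> densities \<Longrightarrow> g1 \<in> densities \<Longrightarrow> error_prob (\<lambda>_. 1/2) g0 g1 = 1/2"
    unfolding error_prob_def
  proof -
    fix g0 g1 :: "real \<Rightarrow> real" assume "g0 \<in> densities" "g1 \<in> densities"
    then show "1/2 * (LINT y|lborel. 1/2 * g0 y) + 1/2 * (LINT y|lborel. (1 - 1/2) * g1 y) = 1/2"
      using half by simp
  qed
  have ep2: "\<And>\<delta>. \<delta> \<in> decision_rules \<Longrightarrow> error_prob \<delta> g g = 1/2"
  proof -
    fix \<delta> assume d: "\<delta> \<in> decision_rules"
    then have dm: "\<delta> \<in> borel_measurable lborel" and db: "\<And>y. 0 \<le> \<delta> y \<and> \<delta> y \<le> 1"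
      unfolding decision_rules_def by auto
    have i1: "integrable lborel (\<lambda>y. \<delta> y * g y)"
    proof (rule Bochner_Integration.integrable_bound[where f=g])
      show "integrable lborel g" by (rule dens_D(3)[OF g])
      show "(\<lambda>y. \<delta> y * g y) \<in> borel_measurable lborel" using dm dens_D(1)[OF g] by measurable
      show "AE x in lborel. norm (\<delta> x * g x) \<le> norm (g x)"
        using db dens_D(2)[OF g] by (auto intro!: AE_I2 simp: abs_mult mult_left_le_one_le)
    qed
    have pt: "\<And>y. (1 - \<delta> y) * g y = g y - \<delta> y * g y" by (simp add: algebra_simps)
    show "error_prob \<delta> g g = 1/2"
      unfolding error_prob_def pt using i1 dens_D(3,4)[OF g] by (simp add: field_simps)
  qed
  show ?thesis
    unfolding lfd_coincide_def least_favorable_def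
  proof (intro exI conjI)
    show "g \<in> unc_class f0 (1/2) e0" by (rule gin0)
    show "g \<in> unc_class f1 (1/2) e1" by (rule gin1)
    show "AE y in lborel. g y = g y" by simp
    have dr: "(\<lambda>_. 1/2 :: real) \<in> decision_rules" unfolding decision_rules_def by auto
    show "\<exists>h\<delta>\<in>decision_rules.
       (\<forall>g0\<in>unc_class f0 (1/2) e0. \<forall>g1\<in>unc_class f1 (1/2) e1. error_prob h\<delta> g0 g1 \<le> error_prob h\<delta> g g) \<and>
       (\<forall>\<delta>\<in>decision_rules. error_prob h\<delta> g g \<le> error_prob \<delta> g g)"
    proof (rule bexI[OF _ dr], intro conjI ballI)
      fix g0 g1 assume "g0 \<in> unc_class f0 (1/2) e0" "g1 \<in> unc_class f1 (1/2) e1"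
      then have gg: "g0 \<in> densities" "g1 \<in> densities" by (auto simp: unc_class_def)
      show "error_prob (\<lambda>_. 1/2) g0 g1 \<le> error_prob (\<lambda>_. 1/2) g g"
        using ep[OF gg] ep[OF g g] by simp
    next
      fix \<delta> assume dd: "\<delta> \<in> decision_rules"
      show "error_prob (\<lambda>_. 1/2) g g \<le> error_prob \<delta> g g" using ep2[OF dd] ep[OF g g] by simp
    qed
  qed
qed

lemma lfd_to:
  assumes f0: "f0 \<in> densities" and f1: "f1 \<in> densities" and L: "lfd_coincide f0 f1 (1/2) e0 e1"
  shows "\<exists>g\<in>densities. 4 * (1 - aff g f0) \<le> e0 \<and> 4 * (1 - aff g f1) \<le> e1"
proof -
  obtain h0 h1 where h0: "h0 \<in> unc_class f0 (1/2) e0" and h1: "h1 \<in> unc_class f1 (1/2) e1"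
    and ae: "AE y in lborel. h0 y = h1 y"
    using L unfolding lfd_coincide_def least_favorable_def by blast
  have d0: "h0 \<in> densities" and d1: "h1 \<in> densities" using h0 h1 unfolding unc_class_def by auto
  have "aff h0 f1 = aff h1 f1" unfolding aff_def
    using borel_measurable_integrable[OF int_sqrt_prod[OF d0 f1]] borel_measurable_integrable[OF int_sqrt_prod[OF d1 f1]]
    by (intro integral_cong_AE) (use ae in \<open>auto intro: AE_mp\<close>)
  then show ?thesis using h0 h1 d0 d1 alpha_div_half[OF d0 f0] alpha_div_half[OF d1 f1]
    unfolding unc_class_def by (intro bexI[of _ h0]) auto
qed


lemma geodesic:
  assumes f0: "f0 \<in> densities" and f1: "f1 \<in> densities" and ne: "\<not> (AE y in lborel. f0 y = f1 y)"
    and t: "0 \<le> t" "t \<le> arccos (aff f0 f1)"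
    and e0: "4 * (1 - cos t) \<le> e0" and e1: "4 * (1 - cos (arccos (aff f0 f1) - t)) \<le> e1"
  shows "lfd_coincide f0 f1 (1/2) e0 e1"
proof -
  define a where "a = aff f0 f1"
  define th where "th = arccos a"
  have a0: "0 \<le> a" and a1: "a < 1" unfolding a_def using aff_nonneg[OF f0 f1] aff_lt1[OF f0 f1 ne] by auto
  have ca: "cos th = a" unfolding th_def using a0 a1 by simp
  have th0: "0 < th" unfolding th_def using arccos_less_arccos[of a 1] a0 a1 by simp
  have thpi: "th \<le> pi/2" unfolding th_def using arccos_le_pi2[of a] a0 a1 by simp
  have sth: "0 < sin th" using th0 thpi by (intro sin_gt_zero) auto
  define p where "p = sin (th - t) / sin th"
  define q where "q = sin t / sin th"
  have tth: "t \<le> th" using t unfolding th_def a_def by simp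
  have p0: "0 \<le> p" unfolding p_def using sth tth thpi t pi_gt_zero by (intro divide_nonneg_pos sin_ge_zero) auto
  have q0: "0 \<le> q" unfolding q_def using sth t tth thpi by (intro divide_nonneg_pos sin_ge_zero) auto
  have sc: "sin th ^ 2 + a ^ 2 = 1" using sin_cos_squared_add[of th] ca by simp
  have st: "sin t ^ 2 + cos t ^ 2 = 1" by simp
  have sd: "sin (th - t) = sin th * cos t - a * sin t" using sin_diff[of th t] ca by simp
  have cd: "cos (th - t) = a * cos t + sin th * sin t" using cos_diff[of th t] ca by simp
  have n: "p^2 + q^2 + 2*p*q*aff f0 f1 = 1"
  proof -
    have "(sin th * cos t - a * sin t)^2 + sin t ^2 + 2 * (sin th * cos t - a * sin t) * sin t * a
          = sin th ^ 2 * (sin t ^ 2 + cos t ^ 2) + sin t ^ 2 * (1 - a^2 - sin th ^ 2)"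
      by algebra
    also have "\<dots> = sin th ^ 2"
    proof -
      have z: "1 - a^2 - sin th ^ 2 = 0" using sc by simp
      show ?thesis by (simp only: z st mult_1_right mult_0_right add_0_right)
    qed
    finally have X: "(sin th * cos t - a * sin t)^2 + sin t ^2 + 2 * (sin th * cos t - a * sin t) * sin t * a = sin th ^ 2" .
    have "p^2 + q^2 + 2*p*q*a = ((sin th * cos t - a * sin t)^2 + sin t ^2 + 2 * (sin th * cos t - a * sin t) * sin t * a) / sin th ^ 2"
      unfolding p_def q_def sd using sth by (simp add: field_simps power2_eq_square)
    then show ?thesis unfolding X a_def[symmetric] using sth by simp
  qed
  define g where "g = (\<lambda>y. (p * sqrt (f0 y) + q * sqrt (f1 y))^2)"
  have gd: "g \<in> densities" and g0: "aff g f0 = p + q * a" and g1: "aff g f1 = p * a + q"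
    using construct[OF f0 f1 p0 q0 n] unfolding g_def a_def by auto
  have "p + q * a = cos t"
  proof -
    have "p + q * a = (sin th * cos t - a * sin t + sin t * a) / sin th"
      unfolding p_def q_def sd using sth by (simp add: field_simps)
    then show ?thesis using sth by simp
  qed
  moreover have "p * a + q = cos (th - t)"
  proof -
    have "p * a + q = ((sin th * cos t - a * sin t) * a + sin t) / sin th"
      unfolding p_def q_def sd using sth by (simp add: field_simps)
    also have "\<dots> = (sin th * (a * cos t + sin th * sin t)) / sin th"
    proof -
      have e: "(sin th * cos t - a * sin t) * a + sin t = sin th * (a * cos t + sin th * sin t) + sin t * (1 - a^2 - sin th ^ 2)"
        by algebra
      have z: "1 - a^2 - sin th ^ 2 = 0" using sc by simp
      show ?thesis unfolding e z by simp
    qed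
    also have "\<dots> = cos (th - t)" using sth cd by simp
    finally show ?thesis .
  qed
  ultimately show ?thesis
    using lfd_from[OF f0 f1 gd] e0 e1 g0 g1 unfolding th_def a_def by simp
qed


lemma limiting_char:
  assumes f0: "f0 \<in> densities" and f1: "f1 \<in> densities" and ne: "\<not> (AE y in lborel. f0 y = f1 y)"
    and L: "limiting_params f0 f1 (1/2) \<epsilon>0 \<epsilon>1"
  shows "0 \<le> \<epsilon>0 \<and> \<epsilon>0 \<le> 4 \<and> 0 \<le> \<epsilon>1 \<and> \<epsilon>1 \<le> 4 \<and>
    aff f0 f1 = (1 - \<epsilon>0/4) * (1 - \<epsilon>1/4) - sqrt (1 - (1 - \<epsilon>0/4)^2) * sqrt (1 - (1 - \<epsilon>1/4)^2)"
proof -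
  define a where "a = aff f0 f1"
  define th where "th = arccos a"
  have a0: "0 \<le> a" and a1: "a < 1" unfolding a_def using aff_nonneg[OF f0 f1] aff_lt1[OF f0 f1 ne] by auto
  have ca: "cos th = a" unfolding th_def using a0 a1 by simp
  have th0: "0 \<le> th" unfolding th_def using arccos_lbound[of a] a0 a1 by simp
  have thpi: "th \<le> pi/2" unfolding th_def using arccos_le_pi2[of a] a0 a1 by simp
  have nn0: "0 \<le> \<epsilon>0" and nn1: "0 \<le> \<epsilon>1" and LC: "lfd_coincide f0 f1 (1/2) \<epsilon>0 \<epsilon>1"
    and mini: "\<And>e0 e1. 0 \<le> e0 \<Longrightarrow> e0 \<le> \<epsilon>0 \<Longrightarrow> 0 \<le> e1 \<Longrightarrow> e1 \<le> \<epsilon>1 \<Longrightarrow> (e0, e1) \<noteq> (\<epsilon>0, \<epsilon>1)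
        \<Longrightarrow> \<not> lfd_coincide f0 f1 (1/2) e0 e1"
    using L unfolding limiting_params_def by blast+
  have geo: "\<And>t e0 e1. 0 \<le> t \<Longrightarrow> t \<le> th \<Longrightarrow> 4 * (1 - cos t) \<le> e0 \<Longrightarrow> 4 * (1 - cos (th - t)) \<le> e1
      \<Longrightarrow> lfd_coincide f0 f1 (1/2) e0 e1"
    using geodesic[OF f0 f1 ne] unfolding th_def a_def by blast
  obtain g where gd: "g \<in> densities" and gc0: "4 * (1 - aff g f0) \<le> \<epsilon>0" and gc1: "4 * (1 - aff g f1) \<le> \<epsilon>1"
    using lfd_to[OF f0 f1 LC] by blast
  have b0: "\<epsilon>0 \<le> 4 * (1 - a)"
  proof (rule ccontr)
    assume "\<not> ?thesis"
    then have lt: "4 * (1 - a) < \<epsilon>0" by simp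
    have "lfd_coincide f0 f1 (1/2) (4 * (1 - a)) \<epsilon>1" using geo[of th] th0 ca nn1 by simp
    moreover have "\<not> lfd_coincide f0 f1 (1/2) (4 * (1 - a)) \<epsilon>1" using lt a1 nn1 by (intro mini) auto
    ultimately show False by simp
  qed
  have b1: "\<epsilon>1 \<le> 4 * (1 - a)"
  proof (rule ccontr)
    assume "\<not> ?thesis"
    then have lt: "4 * (1 - a) < \<epsilon>1" by simp
    have "lfd_coincide f0 f1 (1/2) \<epsilon>0 (4 * (1 - a))" using geo[of 0] th0 ca nn0 by simp
    moreover have "\<not> lfd_coincide f0 f1 (1/2) \<epsilon>0 (4 * (1 - a))" using lt a1 nn0 by (intro mini) auto
    ultimately show False by simp
  qed
  define k0 where "k0 = 1 - \<epsilon>0/4"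
  define k1 where "k1 = 1 - \<epsilon>1/4"
  have k0b: "a \<le> k0" "k0 \<le> 1" unfolding k0_def using b0 nn0 by auto
  have k1b: "a \<le> k1" "k1 \<le> 1" unfolding k1_def using b1 nn1 by auto
  define t0 where "t0 = arccos k0"
  define t1 where "t1 = arccos k1"
  have ct0: "cos t0 = k0" unfolding t0_def using k0b a0 by simp
  have ct1: "cos t1 = k1" unfolding t1_def using k1b a0 by simp
  have t0b: "0 \<le> t0" "t0 \<le> th" unfolding t0_def th_def using k0b a0
    by (auto intro: arccos_lbound arccos_le_arccos)
  have t1b: "0 \<le> t1" "t1 \<le> th" unfolding t1_def th_def using k1b a0
    by (auto intro: arccos_lbound arccos_le_arccos)
  define c0 where "c0 = aff g f0"
  define c1 where "c1 = aff g f1"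
  have c0b: "k0 \<le> c0" "c0 \<le> 1" unfolding c0_def k0_def using gc0 aff_le1[OF gd f0] by auto
  have c1b: "k1 \<le> c1" "c1 \<le> 1" unfolding c1_def k1_def using gc1 aff_le1[OF gd f1] by auto
  define p0 where "p0 = arccos c0"
  define p1 where "p1 = arccos c1"
  have p0b: "0 \<le> p0" "p0 \<le> t0" unfolding p0_def t0_def using c0b k0b a0
    by (auto intro: arccos_lbound arccos_le_arccos)
  have p1b: "0 \<le> p1" "p1 \<le> t1" unfolding p1_def t1_def using c1b k1b a0
    by (auto intro: arccos_lbound arccos_le_arccos)
  have G: "(a - c0 * c1)^2 \<le> (1 - c0^2) * (1 - c1^2)"
    using gram[OF gd f0 f1] a1 unfolding a_def c0_def c1_def by simp
  have "\<bar>a - c0 * c1\<bar> \<le> sqrt ((1 - c0^2) * (1 - c1^2))"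
    using real_sqrt_le_mono[OF G] by simp
  then have ge: "c0 * c1 - sqrt (1 - c0^2) * sqrt (1 - c1^2) \<le> a"
    by (simp add: real_sqrt_mult abs_le_iff)
  have cp: "cos (p0 + p1) = c0 * c1 - sqrt (1 - c0^2) * sqrt (1 - c1^2)"
    unfolding p0_def p1_def cos_add using c0b c1b k0b k1b a0 by (simp add: sin_arccos)
  have "cos (t0 + t1) \<le> cos (p0 + p1)"
    using p0b p1b t0b t1b thpi by (subst cos_mono_le_eq) auto
  then have "cos (t0 + t1) \<le> cos th" using cp ge ca by simp
  then have thle: "th \<le> t0 + t1" using t0b t1b thpi th0 by (subst (asm) cos_mono_le_eq) auto
  have theq: "th = t0 + t1"
  proof (rule ccontr)
    assume "th \<noteq> t0 + t1"
    then have lt: "th < t0 + t1" using thle by simp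
    define t where "t = max 0 (th - t1)"
    have tb: "0 \<le> t" "t \<le> th" "t \<le> t0" "th - t \<le> t1" "th - t \<le> th"
      unfolding t_def using lt t0b t1b by auto
    have L1: "lfd_coincide f0 f1 (1/2) (4 * (1 - cos t)) (4 * (1 - cos (th - t)))"
      using geo[OF tb(1,2)] by simp
    have e0: "cos t0 \<le> cos t" using tb t0b thpi by (subst cos_mono_le_eq) auto
    have e1: "cos t1 \<le> cos (th - t)" using tb t1b thpi by (subst cos_mono_le_eq) auto
    have neq: "(4 * (1 - cos t), 4 * (1 - cos (th - t))) \<noteq> (\<epsilon>0, \<epsilon>1)"
    proof
      assume "(4 * (1 - cos t), 4 * (1 - cos (th - t))) = (\<epsilon>0, \<epsilon>1)"
      then have "cos t = cos t0" "cos (th - t) = cos t1" using ct0 ct1 unfolding k0_def k1_def by auto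
      then have "arccos (cos t) = arccos (cos t0)" "arccos (cos (th - t)) = arccos (cos t1)" by simp_all
      then have "t = t0" "th - t = t1" using tb t0b t1b thpi by (simp_all add: arccos_cos)
      then show False using lt by simp
    qed
    have "\<not> lfd_coincide f0 f1 (1/2) (4 * (1 - cos t)) (4 * (1 - cos (th - t)))"
      using e0 e1 ct0 ct1 neq unfolding k0_def k1_def by (intro mini) auto
    then show False using L1 by simp
  qed
  have "a = k0 * k1 - sqrt (1 - k0^2) * sqrt (1 - k1^2)"
    using ca theq cos_add[of t0 t1] ct0 ct1 unfolding t0_def t1_def
    using k0b k1b a0 by (simp add: sin_arccos)
  then show ?thesis using nn0 nn1 b0 b1 a0 unfolding a_def k0_def k1_def by simp
qed


theorem mainTheorem3:
  fixes f0 f1 :: "real \<Rightarrow> real"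
  assumes "f0 \<in> densities" and "f1 \<in> densities"
    and "\<not> (AE y in lborel. f0 y = f1 y)"
    and "(INF y\<in>supp2 f0 f1. lik_ratio f0 f1 y) = 0"
    and "(SUP y\<in>supp2 f0 f1. lik_ratio f0 f1 y) = \<infinity>"
  defines "a \<equiv> LINT y|lborel. sqrt (f0 y * f1 y)"
  shows "(\<forall>\<epsilon>0 \<epsilon>1. limiting_params f0 f1 (1/2) \<epsilon>0 \<epsilon>1 \<longrightarrow>
            a = 1/16 * (16 - 4 * \<epsilon>1 + \<epsilon>0 * (\<epsilon>1 - 4)
                        - sqrt ((\<epsilon>0 - 8) * \<epsilon>0 * (\<epsilon>1 - 8) * \<epsilon>1)))
       \<and> (\<forall>\<epsilon>. limiting_params f0 f1 (1/2) \<epsilon> \<epsilon> \<longrightarrow> \<epsilon> = 4 - 2 * sqrt (2 * (1 + a)))"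
proof -
  have aa: "a = aff f0 f1" unfolding a_def aff_def by (simp add: real_sqrt_mult)
  have P1: "a = 1/16 * (16 - 4 * \<epsilon>1 + \<epsilon>0 * (\<epsilon>1 - 4) - sqrt ((\<epsilon>0 - 8) * \<epsilon>0 * (\<epsilon>1 - 8) * \<epsilon>1))"
    if L: "limiting_params f0 f1 (1/2) \<epsilon>0 \<epsilon>1" for \<epsilon>0 \<epsilon>1
  proof -
    have C: "0 \<le> \<epsilon>0 \<and> \<epsilon>0 \<le> 4 \<and> 0 \<le> \<epsilon>1 \<and> \<epsilon>1 \<le> 4 \<and>
      a = (1 - \<epsilon>0/4) * (1 - \<epsilon>1/4) - sqrt (1 - (1 - \<epsilon>0/4)^2) * sqrt (1 - (1 - \<epsilon>1/4)^2)"
      using limiting_char[OF assms(1,2,3) L] aa by simp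
    have "sqrt (1 - (1 - \<epsilon>0/4)^2) * sqrt (1 - (1 - \<epsilon>1/4)^2)
        = sqrt (((\<epsilon>0 - 8) * \<epsilon>0 * (\<epsilon>1 - 8) * \<epsilon>1) / 256)"
      unfolding real_sqrt_mult[symmetric] by (rule arg_cong[where f=sqrt]) (simp add: power2_eq_square field_simps)
    also have "\<dots> = sqrt ((\<epsilon>0 - 8) * \<epsilon>0 * (\<epsilon>1 - 8) * \<epsilon>1) / 16"
      by (simp add: real_sqrt_divide)
    finally show ?thesis using C by (simp add: field_simps)
  qed
  have P2: "\<epsilon> = 4 - 2 * sqrt (2 * (1 + a))" if L: "limiting_params f0 f1 (1/2) \<epsilon> \<epsilon>" for \<epsilon>
  proof -
    define k where "k = 1 - \<epsilon>/4"
    have C: "0 \<le> \<epsilon> \<and> \<epsilon> \<le> 4 \<and> a = k * k - sqrt (1 - k^2) * sqrt (1 - k^2)"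
      using limiting_char[OF assms(1,2,3) L] aa unfolding k_def by simp
    have kb: "0 \<le> k" "k \<le> 1" unfolding k_def using C by auto
    have "k^2 \<le> 1" using kb by (simp add: power_le_one)
    then have "a = 2 * k^2 - 1" using C by (simp add: power2_eq_square)
    then have "2 * (1 + a) = (2 * k)^2" by (simp add: power2_eq_square)
    then have "sqrt (2 * (1 + a)) = 2 * k" using kb by (simp only: real_sqrt_abs)
    then show ?thesis unfolding k_def by simp
  qed
  show ?thesis using P1 P2 by blast
qed

end
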